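(* Let $(X,d)$ be a $\delta$-Gromov hyperbolic space, $p\in X$, $\epsilon>0$, and $X^\epsilon=(X,d_\epsilon)$ the uniformized space. Suppose the canonical boundary map $\Phi:\partial_GX\to\partial_{d_\epsilon}X^\epsilon$ is bijective. Let $x\in\partial_{d_\epsilon}X^\epsilon$ and let $(x_n)$, $(y_n)\subseteq X$ both converge to $x$ with respect to $d_\epsilon$. Then any subsequence of $(x_n)$ that is a Gromov sequence and any subsequence of $(y_n)$ that is a Gromov sequence are equivalent Gromov sequences.
   Context: Gromov product $(x|y)_p=\frac12(d(p,x)+d(p,y)-d(x,y))$. $\delta$-Gromov hyperbolic: unbounded, proper, geodesic, and $(x|z)_p\ge\min\{(x|y)_p,(y|z)_p\}-\delta$ for all $x,y,z,p$. Uniformized metric: $d_\epsilon(x,y)=\inf_\gamma\int_\gamma e^{-\epsilon d(p,z)}ds(z)$ over $d$-rectifiable curves; $\partial_{d_\epsilon}X^\epsilon=\overline{X^\epsilon}\setminus X^\epsilon$ (closure in the completion). $\partial_GX$: geodesic rays from $p$ modulo $\gamma\sim\tilde\gamma$ iff $\sup_t d(\gamma(t),\tilde\gamma(t))<\infty$; $\Phi([\gamma])=\lim_{k\to\infty}\gamma(k)$ in $d_\epsilon$ (well defined). A Gromov sequence is $(x_n)$ with $(x_n|x_m)_p\to\infty$; Gromov sequences $(a_k),(b_k)$ are equivalent if $(a_k|b_k)_p\to\infty$. *)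

theory Defs
  imports "HOL-Analysis.Analysis"
begin

section \<open>Gromov hyperbolic spaces (the space X is a type of class metric_space, d = dist)\<close>

definition gromov_product :: "'a::metric_space \<Rightarrow> 'a \<Rightarrow> 'a \<Rightarrow> real" where
  "gromov_product p x y = (dist p x + dist p y - dist x y) / 2"

definition proper_space :: "'a::metric_space itself \<Rightarrow> bool" where
  "proper_space _ \<longleftrightarrow> (\<forall>x::'a. \<forall>r. compact (cball x r))"

definition geodesic_space :: "'a::metric_space itself \<Rightarrow> bool" where
  "geodesic_space _ \<longleftrightarrow> (\<forall>x y::'a. \<exists>g::real \<Rightarrow> 'a. g 0 = x \<and> g (dist x y) = y \<and>
      (\<forall>s\<in>{0..dist x y}. \<forall>t\<in>{0..dist x y}. dist (g s) (g t) = \<bar>s - t\<bar>))"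

definition gromov_hyperbolic :: "real \<Rightarrow> 'a::metric_space itself \<Rightarrow> bool" where
  "gromov_hyperbolic \<delta> T \<longleftrightarrow> \<not> bounded (UNIV :: 'a set) \<and> proper_space T \<and> geodesic_space T \<and>
     (\<forall>x y z w :: 'a. gromov_product w x z \<ge> min (gromov_product w x y) (gromov_product w y z) - \<delta>)"

definition curve_length :: "(real \<Rightarrow> 'a::metric_space) \<Rightarrow> real \<Rightarrow> real \<Rightarrow> real" where
  "curve_length g a b = Sup {(\<Sum>i<n. dist (g (t i)) (g (t (Suc i)))) | n t.
       t 0 = a \<and> t n = b \<and> (\<forall>i<n. t i \<le> t (Suc i))}"

definition arclength_param :: "(real \<Rightarrow> 'a::metric_space) \<Rightarrow> real \<Rightarrow> bool" where
  "arclength_param g L \<longleftrightarrow> 0 \<le> L \<and>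
     (\<forall>s t. 0 \<le> s \<and> s \<le> t \<and> t \<le> L \<longrightarrow>
        bdd_above {(\<Sum>i<n. dist (g (u i)) (g (u (Suc i)))) | n u.
            u 0 = s \<and> u n = t \<and> (\<forall>i<n. u i \<le> u (Suc i))} \<and>
        curve_length g s t = t - s)"

definition d_unif :: "real \<Rightarrow> 'a::metric_space \<Rightarrow> 'a \<Rightarrow> 'a \<Rightarrow> real" where
  "d_unif \<epsilon> p x y = Inf {integral {0..L} (\<lambda>t. exp (- \<epsilon> * dist p (g t))) | g L.
       arclength_param g L \<and> g 0 = x \<and> g L = y}"

section \<open>The boundary of the uniformized space, via the completion (Cauchy sequences)\<close>

definition unif_cauchy :: "real \<Rightarrow> 'a::metric_space \<Rightarrow> (nat \<Rightarrow> 'a) \<Rightarrow> bool" where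
  "unif_cauchy \<epsilon> p c \<longleftrightarrow> (\<forall>e>0. \<exists>N. \<forall>m\<ge>N. \<forall>n\<ge>N. d_unif \<epsilon> p (c m) (c n) < e)"

definition unif_equiv :: "real \<Rightarrow> 'a::metric_space \<Rightarrow> ((nat \<Rightarrow> 'a) \<times> (nat \<Rightarrow> 'a)) set" where
  "unif_equiv \<epsilon> p = {(c, c'). unif_cauchy \<epsilon> p c \<and> unif_cauchy \<epsilon> p c' \<and>
       (\<lambda>n. d_unif \<epsilon> p (c n) (c' n)) \<longlonglongrightarrow> 0}"

text \<open>Cauchy sequences not converging to a point of X: they represent the points of the
  completion not in X, i.e. of the closure of X in the completion minus X.\<close>
definition unif_boundary_seqs :: "real \<Rightarrow> 'a::metric_space \<Rightarrow> (nat \<Rightarrow> 'a) set" where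
  "unif_boundary_seqs \<epsilon> p = {c. unif_cauchy \<epsilon> p c \<and>
       \<not> (\<exists>z. (\<lambda>n. d_unif \<epsilon> p (c n) z) \<longlonglongrightarrow> 0)}"

definition unif_boundary :: "real \<Rightarrow> 'a::metric_space \<Rightarrow> (nat \<Rightarrow> 'a) set set" where
  "unif_boundary \<epsilon> p = unif_boundary_seqs \<epsilon> p // unif_equiv \<epsilon> p"

definition unif_converges_to :: "real \<Rightarrow> 'a::metric_space \<Rightarrow> (nat \<Rightarrow> 'a) \<Rightarrow> (nat \<Rightarrow> 'a) set \<Rightarrow> bool" where
  "unif_converges_to \<epsilon> p xs x \<longleftrightarrow> (\<exists>c\<in>x. (\<lambda>n. d_unif \<epsilon> p (xs n) (c n)) \<longlonglongrightarrow> 0)"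

section \<open>Gromov boundary via geodesic rays, and the canonical map\<close>

definition geodesic_ray :: "'a::metric_space \<Rightarrow> (real \<Rightarrow> 'a) \<Rightarrow> bool" where
  "geodesic_ray p g \<longleftrightarrow> g 0 = p \<and> (\<forall>s\<ge>0. \<forall>t\<ge>0. dist (g s) (g t) = \<bar>s - t\<bar>)"

definition ray_equiv :: "'a::metric_space \<Rightarrow> ((real \<Rightarrow> 'a) \<times> (real \<Rightarrow> 'a)) set" where
  "ray_equiv p = {(g, h). geodesic_ray p g \<and> geodesic_ray p h \<and>
       bdd_above ((\<lambda>t. dist (g t) (h t)) ` {0..})}"

definition gromov_boundary :: "'a::metric_space \<Rightarrow> (real \<Rightarrow> 'a) set set" where
  "gromov_boundary p = {g. geodesic_ray p g} // ray_equiv p"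

text \<open>Phi([g]) = d_eps-limit of g(k), i.e. the class of the sequence (g k)_k.\<close>
definition boundary_map :: "real \<Rightarrow> 'a::metric_space \<Rightarrow> (real \<Rightarrow> 'a) set \<Rightarrow> (nat \<Rightarrow> 'a) set" where
  "boundary_map \<epsilon> p C = (\<Union>g\<in>C. unif_equiv \<epsilon> p `` {(\<lambda>k. g (real k))})"

definition gromov_seq :: "'a::metric_space \<Rightarrow> (nat \<Rightarrow> 'a) \<Rightarrow> bool" where
  "gromov_seq p a \<longleftrightarrow> (\<forall>M. \<exists>N. \<forall>n\<ge>N. \<forall>m\<ge>N. gromov_product p (a n) (a m) \<ge> M)"

definition gromov_seq_equiv :: "'a::metric_space \<Rightarrow> (nat \<Rightarrow> 'a) \<Rightarrow> (nat \<Rightarrow> 'a) \<Rightarrow> bool" where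
  "gromov_seq_equiv p a b \<longleftrightarrow> gromov_seq p a \<and> gromov_seq p b \<and>
     filterlim (\<lambda>k. gromov_product p (a k) (b k)) at_top sequentially"

end

theory Submission
  imports Defs
begin
definition psums :: "(real \<Rightarrow> 'a::metric_space) \<Rightarrow> real \<Rightarrow> real \<Rightarrow> real set" where
  "psums g s t = {(\<Sum>i<n. dist (g (u i)) (g (u (Suc i)))) | n u.
       u 0 = s \<and> u n = t \<and> (\<forall>i<n. u i \<le> u (Suc i))}"

lemma curve_length_psums: "curve_length g s t = Sup (psums g s t)"
  unfolding curve_length_def psums_def by simp

lemma arclength_param_psums: "arclength_param g L \<longleftrightarrow> 0 \<le> L \<and>
     (\<forall>s t. 0 \<le> s \<and> s \<le> t \<and> t \<le> L \<longrightarrow> bdd_above (psums g s t) \<and> Sup (psums g s t) = t - s)"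
  unfolding arclength_param_def psums_def curve_length_def by simp

lemma part_mono:
  fixes u :: "nat \<Rightarrow> real"
  assumes "\<forall>i<n. u i \<le> u (Suc i)" "i \<le> j" "j \<le> n"
  shows "u i \<le> u j"
  using assms(2,3)
proof (induction j)
  case 0 then show ?case by simp
next
  case (Suc j)
  show ?case
  proof (cases "i = Suc j")
    case True then show ?thesis by simp
  next
    case False
    then have "i \<le> j" using Suc.prems by simp
    then have "u i \<le> u j" using Suc by simp
    moreover have "u j \<le> u (Suc j)" using assms(1) Suc.prems by simp
    ultimately show ?thesis by simp
  qed
qed

lemma psums_le:
  assumes lip: "\<And>v w. s \<le> v \<Longrightarrow> v \<le> w \<Longrightarrow> w \<le> t \<Longrightarrow> dist (g v) (g w) \<le> w - v"
    and a: "a \<in> psums g s t"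
  shows "a \<le> t - s"
proof -
  obtain n u where a: "a = (\<Sum>i<n. dist (g (u i)) (g (u (Suc i))))" and
    u: "u 0 = s" "u n = t" "\<forall>i<n. u i \<le> u (Suc i)"
    using a unfolding psums_def by blast
  have "a \<le> (\<Sum>i<n. u (Suc i) - u i)"
    unfolding a
  proof (rule sum_mono)
    fix i assume "i \<in> {..<n}"
    then have i: "i < n" by simp
    have "s \<le> u i" using part_mono[OF u(3), of 0 i] i u(1) by simp
    moreover have "u (Suc i) \<le> t" using part_mono[OF u(3), of "Suc i" n] i u(2) by simp
    ultimately show "dist (g (u i)) (g (u (Suc i))) \<le> u (Suc i) - u i"
      using lip u(3) i by blast
  qed
  also have "\<dots> = t - s" using sum_lessThan_telescope[of u n] u by simp
  finally show ?thesis .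
qed

lemma psums_single: "s \<le> t \<Longrightarrow> dist (g s) (g t) \<in> psums g s t"
  unfolding psums_def
  by (rule CollectI, rule exI[of _ 1], rule exI[of _ "\<lambda>i. if i = 0 then s else t"]) simp

lemma psums_nonempty: "s \<le> t \<Longrightarrow> psums g s t \<noteq> {}"
  using psums_single by blast

lemma psums_concat:
  assumes a: "a \<in> psums g s m" and b: "b \<in> psums g m t"
  shows "a + b \<in> psums g s t"
proof -
  obtain n1 u1 where a: "a = (\<Sum>i<n1. dist (g (u1 i)) (g (u1 (Suc i))))" and
    u1: "u1 0 = s" "u1 n1 = m" "\<forall>i<n1. u1 i \<le> u1 (Suc i)"
    using a unfolding psums_def by blast
  obtain n2 u2 where b: "b = (\<Sum>i<n2. dist (g (u2 i)) (g (u2 (Suc i))))" and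
    u2: "u2 0 = m" "u2 n2 = t" "\<forall>i<n2. u2 i \<le> u2 (Suc i)"
    using b unfolding psums_def by blast
  define u where "u i = (if i \<le> n1 then u1 i else u2 (i - n1))" for i
  have u0: "u 0 = s" using u1 by (simp add: u_def)
  have un: "u (n1 + n2) = t" using u1 u2 by (auto simp: u_def)
  have umono: "\<forall>i<n1+n2. u i \<le> u (Suc i)"
  proof (intro allI impI)
    fix i assume i: "i < n1 + n2"
    show "u i \<le> u (Suc i)"
    proof (cases "i < n1")
      case True then show ?thesis using u1(3) by (simp add: u_def)
    next
      case False
      then have "Suc i - n1 = Suc (i - n1)" by simp
      moreover have "u i = u2 (i - n1)" using False u1(2) u2(1) by (auto simp: u_def)
      ultimately show ?thesis using False u2(3) i by (simp add: u_def)
    qed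
  qed
  have sum1: "(\<Sum>i<n1. dist (g (u i)) (g (u (Suc i)))) = a"
    unfolding a by (rule sum.cong) (auto simp: u_def)
  have sum2: "(\<Sum>i<n1 + k. dist (g (u i)) (g (u (Suc i)))) =
      a + (\<Sum>i<k. dist (g (u2 i)) (g (u2 (Suc i))))" for k
  proof (induction k)
    case 0 then show ?case using sum1 by simp
  next
    case (Suc k)
    have "u (n1 + k) = u2 k" using u1(2) u2(1) by (auto simp: u_def)
    moreover have "u (Suc (n1 + k)) = u2 (Suc k)" by (simp add: u_def)
    ultimately show ?case using Suc by simp
  qed
  show ?thesis unfolding psums_def
    apply (rule CollectI, rule exI[of _ "n1 + n2"], rule exI[of _ u])
    using sum2[of n2] u0 un umono b by simp
qed

lemma psums_cong:
  assumes "\<And>v. s \<le> v \<Longrightarrow> v \<le> t \<Longrightarrow> f v = g v"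
  shows "psums f s t = psums g s t"
proof -
  have *: "(\<Sum>i<n. dist (f (u i)) (f (u (Suc i)))) = (\<Sum>i<n. dist (g (u i)) (g (u (Suc i))))"
    if u: "u 0 = s" "u n = t" "\<forall>i<n. u i \<le> u (Suc i)" for n u
  proof (rule sum.cong)
    fix i assume "i \<in> {..<n}"
    then have i: "i < n" by simp
    have "s \<le> u i" "u i \<le> t" using part_mono[OF u(3), of 0 i] part_mono[OF u(3), of i n] i u by auto
    moreover have "s \<le> u (Suc i)" "u (Suc i) \<le> t"
      using part_mono[OF u(3), of 0 "Suc i"] part_mono[OF u(3), of "Suc i" n] i u by auto
    ultimately show "dist (f (u i)) (f (u (Suc i))) = dist (g (u i)) (g (u (Suc i)))"
      using assms by simp
  qed simp
  have "x \<in> psums f s t \<longleftrightarrow> x \<in> psums g s t" for x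
  proof
    assume "x \<in> psums f s t"
    then obtain n u where x: "x = (\<Sum>i<n. dist (f (u i)) (f (u (Suc i))))" and
      u: "u 0 = s" "u n = t" "\<forall>i<n. u i \<le> u (Suc i)" unfolding psums_def by blast
    show "x \<in> psums g s t" unfolding psums_def
      apply (rule CollectI, rule exI[of _ n], rule exI[of _ u])
      using x u *[OF u] by simp
  next
    assume "x \<in> psums g s t"
    then obtain n u where x: "x = (\<Sum>i<n. dist (g (u i)) (g (u (Suc i))))" and
      u: "u 0 = s" "u n = t" "\<forall>i<n. u i \<le> u (Suc i)" unfolding psums_def by blast
    show "x \<in> psums f s t" unfolding psums_def
      apply (rule CollectI, rule exI[of _ n], rule exI[of _ u])
      using x u *[OF u] by simp
  qed
  then show ?thesis by blast
qed

lemma psums_shift: "psums (\<lambda>x. g (x - c)) s t \<subseteq> psums g (s - c) (t - c)"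
proof
  fix a assume "a \<in> psums (\<lambda>x. g (x - c)) s t"
  then obtain n u where a: "a = (\<Sum>i<n. dist (g (u i - c)) (g (u (Suc i) - c)))" and
    u: "u 0 = s" "u n = t" "\<forall>i<n. u i \<le> u (Suc i)"
    unfolding psums_def by blast
  show "a \<in> psums g (s - c) (t - c)" unfolding psums_def
    apply (rule CollectI, rule exI[of _ n], rule exI[of _ "\<lambda>i. u i - c"])
    using a u by simp
qed

lemma psums_rev: "psums (\<lambda>x. g (c - x)) s t \<subseteq> psums g (c - t) (c - s)"
proof
  fix a assume "a \<in> psums (\<lambda>x. g (c - x)) s t"
  then obtain n u where a: "a = (\<Sum>i<n. dist (g (c - u i)) (g (c - u (Suc i))))" and
    u: "u 0 = s" "u n = t" "\<forall>i<n. u i \<le> u (Suc i)"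
    unfolding psums_def by blast
  define v where "v i = c - u (n - i)" for i
  have "(\<Sum>i<n. dist (g (v i)) (g (v (Suc i)))) = (\<Sum>i<n. dist (g (v (n - Suc i))) (g (v (Suc (n - Suc i)))))"
    by (rule sum.nat_diff_reindex[symmetric])
  also have "\<dots> = a" unfolding a
    by (rule sum.cong) (auto simp: v_def dist_commute Suc_diff_Suc)
  finally have s: "(\<Sum>i<n. dist (g (v i)) (g (v (Suc i)))) = a" .
  have m: "\<forall>i<n. v i \<le> v (Suc i)"
  proof (intro allI impI)
    fix i assume "i < n"
    then have "n - i = Suc (n - Suc i)" by simp
    then show "v i \<le> v (Suc i)" using u(3) \<open>i < n\<close> by (simp add: v_def)
  qed
  show "a \<in> psums g (c - t) (c - s)" unfolding psums_def
    apply (rule CollectI, rule exI[of _ n], rule exI[of _ v])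
    using s m u by (simp add: v_def)
qed

lemma Sup_add_le:
  fixes A B C :: "real set"
  assumes "A \<noteq> {}" "B \<noteq> {}" "bdd_above C" "\<And>a b. a \<in> A \<Longrightarrow> b \<in> B \<Longrightarrow> a + b \<in> C"
  shows "Sup A + Sup B \<le> Sup C"
proof -
  have "a + b \<le> Sup C" if "a \<in> A" "b \<in> B" for a b
    using assms(3,4) that by (simp add: cSup_upper)
  then have "Sup A \<le> Sup C - b" if "b \<in> B" for b
    using assms(1) that by (intro cSup_least) (auto simp: algebra_simps)
  then have "Sup B \<le> Sup C - Sup A"
    using assms(2) by (intro cSup_least) (auto simp: algebra_simps)
  then show ?thesis by simp
qed

lemma AP_lip:
  assumes "arclength_param g L" "0 \<le> v" "v \<le> w" "w \<le> L"
  shows "dist (g v) (g w) \<le> w - v"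
proof -
  have "bdd_above (psums g v w)" "Sup (psums g v w) = w - v"
    using assms unfolding arclength_param_psums by auto
  then show ?thesis using psums_single[OF assms(3), of g] cSup_upper by fastforce
qed

lemma AP_intro:
  assumes "0 \<le> L"
    and lip: "\<And>v w. 0 \<le> v \<Longrightarrow> v \<le> w \<Longrightarrow> w \<le> L \<Longrightarrow> dist (g v) (g w) \<le> w - v"
    and ge: "\<And>s t. 0 \<le> s \<Longrightarrow> s \<le> t \<Longrightarrow> t \<le> L \<Longrightarrow> t - s \<le> Sup (psums g s t)"
  shows "arclength_param g L"
  unfolding arclength_param_psums
proof (intro conjI allI impI assms(1))
  fix s t assume st: "0 \<le> s \<and> s \<le> t \<and> t \<le> L"
  have lip': "dist (g v) (g w) \<le> w - v" if "s \<le> v" "v \<le> w" "w \<le> t" for v w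
    using lip[of v w] st that by auto
  have le: "a \<le> t - s" if "a \<in> psums g s t" for a
    using psums_le[OF lip' that] by blast
  show "bdd_above (psums g s t)" using le by (intro bdd_aboveI[where M="t - s"]) blast
  show "Sup (psums g s t) = t - s"
  proof (rule antisym)
    show "Sup (psums g s t) \<le> t - s"
      using le st psums_nonempty[of s t g] by (intro cSup_least) auto
    show "t - s \<le> Sup (psums g s t)" using ge[of s t] st by auto
  qed
qed

lemma AP_geodesic:
  assumes "0 \<le> L" "\<And>v w. 0 \<le> v \<Longrightarrow> v \<le> L \<Longrightarrow> 0 \<le> w \<Longrightarrow> w \<le> L \<Longrightarrow> dist (g v) (g w) = \<bar>v - w\<bar>"
  shows "arclength_param g L"
proof (rule AP_intro[OF assms(1)])
  fix v w :: real assume "0 \<le> v" "v \<le> w" "w \<le> L"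
  then show "dist (g v) (g w) \<le> w - v" using assms(2) by simp
next
  fix s t :: real assume st: "0 \<le> s" "s \<le> t" "t \<le> L"
  have lip: "dist (g v) (g w) \<le> w - v" if "s \<le> v" "v \<le> w" "w \<le> t" for v w
    using assms(2)[of v w] st that by simp
  have le: "a \<le> t - s" if "a \<in> psums g s t" for a
    using psums_le[OF lip that] by blast
  have "dist (g s) (g t) \<le> Sup (psums g s t)"
    using psums_single[OF st(2), of g] le by (intro cSup_upper) (auto intro!: bdd_aboveI[where M="t - s"])
  then show "t - s \<le> Sup (psums g s t)" using assms(2) st by simp
qed

lemma AP_rev:
  assumes "arclength_param g L"
  shows "arclength_param (\<lambda>t. g (L - t)) L"
proof (rule AP_intro)
  show "0 \<le> L" using assms unfolding arclength_param_def by simp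
next
  fix v w :: real assume "0 \<le> v" "v \<le> w" "w \<le> L"
  then show "dist (g (L - v)) (g (L - w)) \<le> w - v"
    using AP_lip[OF assms, of "L - w" "L - v"] by (simp add: dist_commute)
next
  fix s t :: real assume st: "0 \<le> s" "s \<le> t" "t \<le> L"
  have sub: "psums g (L - t) (L - s) \<subseteq> psums (\<lambda>t. g (L - t)) s t"
    using psums_rev[of "\<lambda>t. g (L - t)" L "L - t" "L - s"] by simp
  have lip: "dist (g (L - v)) (g (L - w)) \<le> w - v" if "s \<le> v" "v \<le> w" "w \<le> t" for v w
    using AP_lip[OF assms, of "L - w" "L - v"] st that by (simp add: dist_commute)
  have le: "a \<le> t - s" if "a \<in> psums (\<lambda>t. g (L - t)) s t" for a
    using psums_le[of s t "\<lambda>t. g (L - t)", OF lip that] by blast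
  have "t - s = Sup (psums g (L - t) (L - s))"
    using assms st unfolding arclength_param_psums by auto
  also have "\<dots> \<le> Sup (psums (\<lambda>t. g (L - t)) s t)"
    using sub psums_nonempty[of "L - t" "L - s" g] st le
    by (intro cSup_subset_mono) (auto intro!: bdd_aboveI[where M="t - s"])
  finally show "t - s \<le> Sup (psums (\<lambda>t. g (L - t)) s t)" .
qed

lemma lip_continuous:
  assumes lip: "\<And>v w. 0 \<le> v \<Longrightarrow> v \<le> w \<Longrightarrow> w \<le> L \<Longrightarrow> dist (g v) (g w) \<le> w - v"
  shows "continuous_on {0..L} g"
  unfolding continuous_on_iff
proof (intro ballI allI impI)
  fix x e assume x: "x \<in> {0..(L::real)}" and e: "(0::real) < e"
  show "\<exists>d>0. \<forall>x'\<in>{0..L}. dist x' x < d \<longrightarrow> dist (g x') (g x) < e"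
  proof (intro exI[of _ e] conjI ballI impI e)
    fix x' assume x': "x' \<in> {0..L}" and d: "dist x' x < e"
    have "dist (g x') (g x) \<le> \<bar>x' - x\<bar>"
    proof (cases "x' \<le> x")
      case True then show ?thesis using lip[of x' x] x x' by simp
    next
      case False then show ?thesis using lip[of x x'] x x' by (simp add: dist_commute)
    qed
    then show "dist (g x') (g x) < e" using d by (simp add: dist_real_def)
  qed
qed

lemma lip_integrable:
  assumes lip: "\<And>v w. 0 \<le> v \<Longrightarrow> v \<le> w \<Longrightarrow> w \<le> L \<Longrightarrow> dist (g v) (g w) \<le> w - v"
  shows "(\<lambda>t. exp (- e * dist p (g t))) integrable_on {0..L}"
proof -
  have "continuous_on {0..L} g" by (rule lip_continuous[OF lip])
  then have "continuous_on {0..L} (\<lambda>t. exp (- e * dist p (g t)))"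
    by (intro continuous_intros) auto
  then show ?thesis by (rule integrable_continuous_interval)
qed

lemma AP_integrable:
  "arclength_param g L \<Longrightarrow> (\<lambda>t. exp (- e * dist p (g t))) integrable_on {0..L}"
  using lip_integrable AP_lip by blast

definition uJ :: "real \<Rightarrow> 'a::metric_space \<Rightarrow> (real \<Rightarrow> 'a) \<Rightarrow> real \<Rightarrow> real" where
  "uJ e p g L = integral {0..L} (\<lambda>t. exp (- e * dist p (g t)))"

lemma uJ_nonneg: "arclength_param g L \<Longrightarrow> 0 \<le> uJ e p g L"
  unfolding uJ_def by (rule integral_nonneg[OF AP_integrable]) auto

lemma d_unif_uJ: "d_unif e p x y = Inf {uJ e p g L | g L. arclength_param g L \<and> g 0 = x \<and> g L = y}"
  unfolding d_unif_def uJ_def by simp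

lemma AP_concat:
  assumes g1: "arclength_param g1 L1" and g2: "arclength_param g2 L2" and eq: "g1 L1 = g2 0"
  shows "arclength_param (\<lambda>t. if t \<le> L1 then g1 t else g2 (t - L1)) (L1 + L2)"
    and "uJ e p (\<lambda>t. if t \<le> L1 then g1 t else g2 (t - L1)) (L1 + L2) = uJ e p g1 L1 + uJ e p g2 L2"
proof -
  define h where "h = (\<lambda>t. if t \<le> L1 then g1 t else g2 (t - L1))"
  have L1: "0 \<le> L1" and L2: "0 \<le> L2" using g1 g2 unfolding arclength_param_def by auto
  have lip: "dist (h v) (h w) \<le> w - v" if "0 \<le> v" "v \<le> w" "w \<le> L1 + L2" for v w
  proof (cases "w \<le> L1")
    case True then show ?thesis using AP_lip[OF g1, of v w] that by (simp add: h_def)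
  next
    case False
    show ?thesis
    proof (cases "v \<le> L1")
      case True
      have "dist (h v) (h w) \<le> dist (g1 v) (g1 L1) + dist (g2 0) (g2 (w - L1))"
        using True False eq dist_triangle[of "g1 v" "g2 (w - L1)" "g1 L1"] by (simp add: h_def)
      also have "\<dots> \<le> (L1 - v) + (w - L1 - 0)"
        using AP_lip[OF g1, of v L1] AP_lip[OF g2, of 0 "w - L1"] True False that L2
        by (intro add_mono) auto
      finally show ?thesis by simp
    next
      case False
      then show ?thesis using AP_lip[OF g2, of "v - L1" "w - L1"] that \<open>\<not> w \<le> L1\<close>
        by (simp add: h_def)
    qed
  qed
  have bdd: "bdd_above (psums h s t)" if "0 \<le> s" "s \<le> t" "t \<le> L1 + L2" for s t
  proof -
    have lip': "dist (h v) (h w) \<le> w - v" if "s \<le> v" "v \<le> w" "w \<le> t" for v w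
      using lip[of v w] that \<open>0 \<le> s\<close> \<open>t \<le> L1 + L2\<close> by simp
    have "a \<le> t - s" if "a \<in> psums h s t" for a
      using psums_le[of s t h, OF lip' that] by blast
    then show ?thesis by (intro bdd_aboveI[where M="t - s"]) blast
  qed
  have caseA: "t - s \<le> Sup (psums h s t)" if "0 \<le> s" "s \<le> t" "t \<le> L1" for s t
  proof -
    have hv: "h v = g1 v" if "v \<le> t" for v
      using that \<open>t \<le> L1\<close> by (simp add: h_def)
    have "psums h s t = psums g1 s t" by (rule psums_cong) (rule hv)
    moreover have "Sup (psums g1 s t) = t - s"
      using g1 that unfolding arclength_param_psums by blast
    ultimately show ?thesis by simp
  qed
  have caseB: "t - s \<le> Sup (psums h s t)" if "L1 \<le> s" "s \<le> t" "t \<le> L1 + L2" for s t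
  proof -
    have hv: "h v = g2 (v - L1)" if "s \<le> v" for v
    proof (cases "v \<le> L1")
      case True then have "v = L1" using that \<open>L1 \<le> s\<close> by simp
      then show ?thesis using eq by (simp add: h_def)
    qed (simp add: h_def)
    have e1: "psums h s t = psums (\<lambda>x. g2 (x - L1)) s t"
      by (rule psums_cong) (rule hv)
    have e2: "psums g2 (s - L1) (t - L1) \<subseteq> psums (\<lambda>x. g2 (x - L1)) s t"
      using psums_shift[of "\<lambda>x. g2 (x - L1)" "- L1" "s - L1" "t - L1"] by simp
    have e3: "Sup (psums g2 (s - L1) (t - L1)) = t - s"
      using g2 that unfolding arclength_param_psums by auto
    have ne: "psums g2 (s - L1) (t - L1) \<noteq> {}" using psums_nonempty[of "s - L1" "t - L1" g2] that by simp
    have bd: "bdd_above (psums h s t)" using bdd[of s t] that L1 by simp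
    have "Sup (psums g2 (s - L1) (t - L1)) \<le> Sup (psums h s t)"
      using cSup_subset_mono[OF ne bd] e1 e2 by simp
    then show ?thesis using e3 by simp
  qed
  show "arclength_param h (L1 + L2)"
  proof (rule AP_intro)
    show "0 \<le> L1 + L2" using L1 L2 by simp
    show "dist (h v) (h w) \<le> w - v" if "0 \<le> v" "v \<le> w" "w \<le> L1 + L2" for v w
      using lip that by blast
  next
    fix s t :: real assume st: "0 \<le> s" "s \<le> t" "t \<le> L1 + L2"
    show "t - s \<le> Sup (psums h s t)"
    proof (cases "t \<le> L1")
      case True then show ?thesis using caseA st by blast
    next
      case tL: False
      show ?thesis
      proof (cases "L1 \<le> s")
        case True then show ?thesis using caseB st by blast
      next
        case False
        have "Sup (psums h s L1) + Sup (psums h L1 t) \<le> Sup (psums h s t)"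
        proof (rule Sup_add_le)
          show "psums h s L1 \<noteq> {}" "psums h L1 t \<noteq> {}"
            using psums_nonempty[of s L1 h] psums_nonempty[of L1 t h] False tL by auto
          show "bdd_above (psums h s t)" by (rule bdd[OF st])
          show "a + b \<in> psums h s t" if "a \<in> psums h s L1" "b \<in> psums h L1 t" for a b
            using psums_concat[OF that] .
        qed
        moreover have "L1 - s \<le> Sup (psums h s L1)" using caseA[of s L1] st False by simp
        moreover have "t - L1 \<le> Sup (psums h L1 t)" using caseB[of L1 t] st tL by simp
        ultimately show ?thesis by simp
      qed
    qed
  qed
  have int: "(\<lambda>t. exp (- e * dist p (h t))) integrable_on {0..L1 + L2}"
    by (rule lip_integrable) (use lip in auto)
  have "uJ e p h (L1 + L2) = integral {0..L1} (\<lambda>t. exp (- e * dist p (h t))) +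
      integral {L1..L1 + L2} (\<lambda>t. exp (- e * dist p (h t)))"
    unfolding uJ_def using Henstock_Kurzweil_Integration.integral_combine[OF L1 _ int] L2 by simp
  also have "integral {0..L1} (\<lambda>t. exp (- e * dist p (h t))) = uJ e p g1 L1"
    unfolding uJ_def by (rule integral_cong) (simp add: h_def)
  also have "integral {L1..L1 + L2} (\<lambda>t. exp (- e * dist p (h t))) =
      integral {L1..L1 + L2} (\<lambda>t. exp (- e * dist p (g2 (t - L1))))"
    by (rule integral_cong) (use eq in \<open>auto simp add: h_def\<close>)
  also have "\<dots> = uJ e p g2 L2"
    unfolding uJ_def
    using integral_shift_Icc_real[of 0 L2 "\<lambda>t. exp (- e * dist p (g2 (t - L1)))" L1]
    by (simp add: o_def add.commute)
  finally show "uJ e p (\<lambda>t. if t \<le> L1 then g1 t else g2 (t - L1)) (L1 + L2) = uJ e p g1 L1 + uJ e p g2 L2"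
    unfolding h_def .
qed

lemma uJ_rev:
  "uJ e p (\<lambda>t. g (L - t)) L = uJ e p g L"
proof -
  define F where "F y = exp (- e * dist p (g (- y)))" for y
  have "uJ e p (\<lambda>t. g (L - t)) L = integral {0..L} (F \<circ> (+) (- L))"
    unfolding uJ_def F_def by (simp add: o_def)
  also have "\<dots> = integral {- L .. - 0} (\<lambda>x. exp (- e * dist p (g (- x))))"
    unfolding integral_shift_Icc_real F_def by simp
  also have "\<dots> = uJ e p g L"
    unfolding uJ_def by (rule Henstock_Kurzweil_Integration.integral_reflect_real[of L 0 "\<lambda>t. exp (- e * dist p (g t))"])
  finally show ?thesis .
qed

lemma geodesic_AP:
  assumes "geodesic_space TYPE('a::metric_space)"
  obtains g where "arclength_param g (dist x y)" "g 0 = x" "g (dist x y) = (y::'a)"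
    "\<And>v w. 0 \<le> v \<Longrightarrow> v \<le> dist x y \<Longrightarrow> 0 \<le> w \<Longrightarrow> w \<le> dist x y \<Longrightarrow> dist (g v) (g w) = \<bar>v - w\<bar>"
proof -
  obtain g where g: "g 0 = x" "g (dist x y) = y"
    "\<forall>s\<in>{0..dist x y}. \<forall>t\<in>{0..dist x y}. dist (g s) (g t) = \<bar>s - t\<bar>"
    using assms unfolding geodesic_space_def by blast
  have iso: "\<And>v w. 0 \<le> v \<Longrightarrow> v \<le> dist x y \<Longrightarrow> 0 \<le> w \<Longrightarrow> w \<le> dist x y \<Longrightarrow> dist (g v) (g w) = \<bar>v - w\<bar>"
    using g(3) by auto
  have "arclength_param g (dist x y)" by (rule AP_geodesic) (use iso in auto)
  then show ?thesis using that g iso by blast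
qed

lemma d_unif_le:
  assumes "arclength_param g L" "g 0 = x" "g L = y"
  shows "d_unif e p x y \<le> uJ e p g L"
  unfolding d_unif_uJ
  by (rule cInf_lower) (use assms uJ_nonneg in \<open>auto intro!: bdd_belowI[where m=0]\<close>)

lemma d_unif_nonneg:
  assumes "geodesic_space TYPE('a::metric_space)"
  shows "0 \<le> d_unif e p x (y::'a)"
proof -
  obtain g where "arclength_param g (dist x y)" "g 0 = x" "g (dist x y) = y"
    using geodesic_AP[OF assms] by blast
  then show ?thesis unfolding d_unif_uJ
    by (intro cInf_greatest) (use uJ_nonneg in auto)
qed

lemma d_unif_refl: "d_unif e p x x \<le> 0"
proof -
  have "arclength_param (\<lambda>_. x) 0" by (rule AP_geodesic) auto
  then have "d_unif e p x x \<le> uJ e p (\<lambda>_. x) 0" by (rule d_unif_le) auto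
  then show ?thesis by (simp add: uJ_def)
qed

lemma d_unif_sym:
  assumes "geodesic_space TYPE('a::metric_space)"
  shows "d_unif e p x y = d_unif e p y (x::'a)"
proof -
  have *: "d_unif e p a b \<le> d_unif e p b a" for a b :: 'a
  proof -
    obtain g0 where g0: "arclength_param g0 (dist b a)" "g0 0 = b" "g0 (dist b a) = a"
      using geodesic_AP[OF assms] by blast
    have "d_unif e p a b \<le> uJ e p g L" if "arclength_param g L" "g 0 = b" "g L = a" for g L
    proof -
      have "d_unif e p a b \<le> uJ e p (\<lambda>t. g (L - t)) L"
        by (rule d_unif_le[OF AP_rev[OF that(1)]]) (use that in auto)
      then show ?thesis by (simp add: uJ_rev)
    qed
    then show ?thesis unfolding d_unif_uJ[of e p b a]
      by (intro cInf_greatest) (use g0 in auto)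
  qed
  show ?thesis using *[of x y] *[of y x] by simp
qed

lemma d_unif_triangle:
  assumes "geodesic_space TYPE('a::metric_space)"
  shows "d_unif e p x z \<le> d_unif e p x y + d_unif e p y (z::'a)"
proof -
  obtain g0 where g0: "arclength_param g0 (dist x y)" "g0 0 = x" "g0 (dist x y) = y"
    using geodesic_AP[OF assms] by blast
  obtain g0' where g0': "arclength_param g0' (dist y z)" "g0' 0 = y" "g0' (dist y z) = z"
    using geodesic_AP[OF assms] by blast
  have main: "d_unif e p x z \<le> uJ e p g1 L1 + uJ e p g2 L2"
    if g1: "arclength_param g1 L1" "g1 0 = x" "g1 L1 = y"
    and g2: "arclength_param g2 L2" "g2 0 = y" "g2 L2 = z" for g1 L1 g2 L2
  proof -
    have L1: "0 \<le> L1" using g1 unfolding arclength_param_def by simp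
    have L2: "0 \<le> L2" using g2 unfolding arclength_param_def by simp
    have endp: "(if L1 + L2 \<le> L1 then g1 (L1 + L2) else g2 (L1 + L2 - L1)) = z"
      by (cases "L2 = 0") (use g1 g2 L2 in auto)
    have "d_unif e p x z \<le> uJ e p (\<lambda>t. if t \<le> L1 then g1 t else g2 (t - L1)) (L1 + L2)"
      by (rule d_unif_le[OF AP_concat(1)[OF g1(1) g2(1)]]) (use g1 g2 L1 endp in auto)
    then show ?thesis using AP_concat(2)[OF g1(1) g2(1), of e p] g1 g2 by simp
  qed
  have step1: "d_unif e p x z - uJ e p g2 L2 \<le> d_unif e p x y"
    if g2: "arclength_param g2 L2" "g2 0 = y" "g2 L2 = z" for g2 L2
    unfolding d_unif_uJ[of e p x y]
    by (intro cInf_greatest) (use g0 main g2 in \<open>force+\<close>)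
  have "d_unif e p x z - d_unif e p x y \<le> d_unif e p y z"
    unfolding d_unif_uJ[of e p y z]
    by (intro cInf_greatest) (use g0' step1 in \<open>force+\<close>)
  then show ?thesis by simp
qed

lemma gp_sym: "gromov_product p x y = gromov_product p y x"
  unfolding gromov_product_def by (simp add: dist_commute)

lemma gp_self: "gromov_product p x x = dist p x"
  unfolding gromov_product_def by simp

lemma gp_lip: "\<bar>gromov_product p x y - gromov_product p x y'\<bar> \<le> dist y y'"
proof -
  have h: "dist p y \<le> dist p y' + dist y y'" "dist p y' \<le> dist p y + dist y y'"
    "dist x y' \<le> dist x y + dist y y'" "dist x y \<le> dist x y' + dist y y'"
    using dist_triangle[of p y y'] dist_triangle[of p y' y] dist_triangle[of x y' y] dist_triangle[of x y y']
    by (auto simp: dist_commute)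
  show ?thesis unfolding gromov_product_def abs_le_iff using h by (intro conjI) argo+
qed

lemma small_exp:
  fixes \<epsilon> e :: real
  assumes "\<epsilon> > 0" "e > 0"
  shows "\<exists>M. \<forall>z\<ge>M. 2 / \<epsilon> * exp (- \<epsilon> * z) < e"
proof (intro exI allI impI)
  fix z :: real assume z: "2 / (\<epsilon> * \<epsilon> * e) + 1 \<le> z"
  have pos: "0 < 2 / (\<epsilon> * \<epsilon> * e)" using assms by simp
  then have zpos: "0 < z" using z by linarith
  have "1 + \<epsilon> * z \<le> exp (\<epsilon> * z)" by (rule exp_ge_add_one_self)
  then have "1 / exp (\<epsilon> * z) \<le> 1 / (1 + \<epsilon> * z)"
    using assms zpos by (intro divide_left_mono) (auto intro!: mult_pos_pos add_pos_pos)
  moreover have "exp (- \<epsilon> * z) = 1 / exp (\<epsilon> * z)" by (simp add: exp_minus inverse_eq_divide)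
  ultimately have "exp (- \<epsilon> * z) \<le> 1 / (1 + \<epsilon> * z)" by simp
  also have "\<dots> < 1 / (\<epsilon> * z)" using assms zpos
    by (intro divide_strict_left_mono) (auto intro!: mult_pos_pos add_pos_pos)
  finally have ex: "exp (- \<epsilon> * z) < 1 / (\<epsilon> * z)" .
  have "2 / \<epsilon> * exp (- \<epsilon> * z) < 2 / \<epsilon> * (1 / (\<epsilon> * z))"
    using assms by (intro mult_strict_left_mono[OF ex]) auto
  also have "\<dots> = 2 / (\<epsilon> * \<epsilon> * z)" by simp
  also have "\<dots> \<le> 2 / (\<epsilon> * \<epsilon> * (2 / (\<epsilon> * \<epsilon> * e)))"
    using assms z pos zpos by (intro divide_left_mono mult_left_mono) auto
  also have "\<dots> = e" using assms by (simp add: field_simps)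
  finally show "2 / \<epsilon> * exp (- \<epsilon> * z) < e" .
qed

lemma d_unif_bound:
  assumes geo: "geodesic_space TYPE('a::metric_space)" and ep: "\<epsilon> > 0"
  shows "d_unif \<epsilon> p x (y::'a) \<le> 2 / \<epsilon> * exp (- \<epsilon> * gromov_product p x y)"
proof -
  define D where "D = dist x y"
  obtain g where g: "arclength_param g D" "g 0 = x" "g D = y"
    and iso: "\<And>v w. 0 \<le> v \<Longrightarrow> v \<le> D \<Longrightarrow> 0 \<le> w \<Longrightarrow> w \<le> D \<Longrightarrow> dist (g v) (g w) = \<bar>v - w\<bar>"
    using geodesic_AP[OF geo, of x y] unfolding D_def by blast
  define c where "c = gromov_product p x y"
  define t0 where "t0 = dist p x - c"
  have c_eq: "c = (dist p x + dist p y - D) / 2" unfolding c_def D_def gromov_product_def by simp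
  have tri: "dist p y \<le> dist p x + D" "dist p x \<le> dist p y + D"
    using dist_triangle[of p y x] dist_triangle[of p x y] unfolding D_def
    by (auto simp: dist_commute)
  have t01: "0 \<le> t0" using tri unfolding t0_def c_eq by argo
  have t02: "t0 \<le> D" using tri unfolding t0_def c_eq by argo
  note t0 = t01 t02
  have D0: "0 \<le> D" unfolding D_def by simp
  define F where "F t = exp (- \<epsilon> * dist p (g t))" for t
  define G1 where "G1 t = exp (- \<epsilon> * (c + t0 - t))" for t
  define G2 where "G2 t = exp (- \<epsilon> * (c + t - t0))" for t
  have FG1: "F t \<le> G1 t" if "t \<in> {0..t0}" for t
  proof -
    have "dist p x \<le> dist p (g t) + dist (g t) (g 0)" using dist_triangle[of p x "g t"] g(2)
      by (simp add: dist_commute)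
    moreover have "dist (g t) (g 0) = t" using iso[of t 0] that t0 by simp
    ultimately have "c + t0 - t \<le> dist p (g t)" unfolding t0_def by simp
    then show ?thesis unfolding F_def G1_def using ep by simp
  qed
  have FG2: "F t \<le> G2 t" if "t \<in> {t0..D}" for t
  proof -
    have "dist p y \<le> dist p (g t) + dist (g t) (g D)" using dist_triangle[of p y "g t"] g(3)
      by (simp add: dist_commute)
    moreover have "dist (g t) (g D) = D - t" using iso[of t D] that t0 by simp
    ultimately have "c + t - t0 \<le> dist p (g t)" unfolding t0_def c_eq by simp
    then show ?thesis unfolding F_def G2_def using ep by simp
  qed
  have H1: "(G1 has_integral (G1 t0 / \<epsilon> - G1 0 / \<epsilon>)) {0..t0}"
  proof (rule fundamental_theorem_of_calculus[OF t0(1)])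
    fix t assume "t \<in> {0..t0}"
    have "((\<lambda>t. G1 t / \<epsilon>) has_real_derivative G1 t) (at t within {0..t0})"
      unfolding G1_def using ep by (auto intro!: derivative_eq_intros simp: field_simps)
    then show "((\<lambda>t. G1 t / \<epsilon>) has_vector_derivative G1 t) (at t within {0..t0})"
      by (simp add: has_real_derivative_iff_has_vector_derivative)
  qed
  have H2: "(G2 has_integral (- G2 D / \<epsilon> - (- G2 t0 / \<epsilon>))) {t0..D}"
  proof (rule fundamental_theorem_of_calculus[OF t0(2)])
    fix t assume "t \<in> {t0..D}"
    have "((\<lambda>t. - G2 t / \<epsilon>) has_real_derivative G2 t) (at t within {t0..D})"
      unfolding G2_def using ep by (auto intro!: derivative_eq_intros simp: field_simps)
    then show "((\<lambda>t. - G2 t / \<epsilon>) has_vector_derivative G2 t) (at t within {t0..D})"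
      by (simp add: has_real_derivative_iff_has_vector_derivative)
  qed
  have Fint: "F integrable_on {0..D}" unfolding F_def by (rule AP_integrable[OF g(1)])
  have "uJ \<epsilon> p g D = integral {0..t0} F + integral {t0..D} F"
    unfolding uJ_def F_def[symmetric]
    using Henstock_Kurzweil_Integration.integral_combine[OF t0 Fint] by simp
  also have "integral {0..t0} F \<le> G1 t0 / \<epsilon> - G1 0 / \<epsilon>"
    using integral_le[OF integrable_subinterval_real[OF Fint] has_integral_integrable[OF H1] FG1] t0
      integral_unique[OF H1] by simp
  also have "integral {t0..D} F \<le> - G2 D / \<epsilon> - (- G2 t0 / \<epsilon>)"
    using integral_le[OF integrable_subinterval_real[OF Fint] has_integral_integrable[OF H2] FG2] t0
      integral_unique[OF H2] by simp
  also have "G1 t0 / \<epsilon> - G1 0 / \<epsilon> + (- G2 D / \<epsilon> - (- G2 t0 / \<epsilon>)) \<le> G1 t0 / \<epsilon> + G2 t0 / \<epsilon>"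
    using ep by (simp add: G1_def G2_def field_simps)
  also have "\<dots> = 2 / \<epsilon> * exp (- \<epsilon> * gromov_product p x y)"
    unfolding G1_def G2_def c_def by (simp add: field_simps)
  finally have "uJ \<epsilon> p g D \<le> 2 / \<epsilon> * exp (- \<epsilon> * gromov_product p x y)" by simp
  then show ?thesis using d_unif_le[OF g, of \<epsilon> p] by linarith
qed

definition pfilt :: "nat set set \<Rightarrow> bool" where
  "pfilt F \<longleftrightarrow> (\<forall>X\<in>F. \<forall>Y. X \<subseteq> Y \<longrightarrow> Y \<in> F) \<and> (\<forall>X\<in>F. \<forall>Y\<in>F. X \<inter> Y \<in> F) \<and>
     {} \<notin> F \<and> (\<forall>n. {n..} \<in> F)"

lemma pfilt_up: "pfilt F \<Longrightarrow> X \<in> F \<Longrightarrow> X \<subseteq> Y \<Longrightarrow> Y \<in> F"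
  unfolding pfilt_def by blast

lemma pfilt_int: "pfilt F \<Longrightarrow> X \<in> F \<Longrightarrow> Y \<in> F \<Longrightarrow> X \<inter> Y \<in> F"
  unfolding pfilt_def by blast

lemma pfilt_ne: "pfilt F \<Longrightarrow> X \<in> F \<Longrightarrow> \<exists>j. j \<in> X"
  unfolding pfilt_def by (metis ex_in_conv)

lemma pfilt_tail: "pfilt F \<Longrightarrow> {n..} \<subseteq> X \<Longrightarrow> X \<in> F"
  unfolding pfilt_def by blast

lemma pfilt_UNIV: "pfilt F \<Longrightarrow> UNIV \<in> F"
  using pfilt_tail[of F 0 UNIV] by simp

lemma pfilt_Inter:
  assumes "pfilt F" "finite T" "\<forall>x\<in>T. S x \<in> F"
  shows "(\<Inter>x\<in>T. S x) \<in> F"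
  using assms(2,3)
proof (induction T rule: finite_induct)
  case empty then show ?case using pfilt_UNIV[OF assms(1)] by simp
next
  case (insert x T)
  then show ?case using pfilt_int[OF assms(1)] by simp
qed

lemma ultra_exists: "\<exists>U. pfilt U \<and> (\<forall>X. X \<in> U \<or> - X \<in> U)"
proof -
  define A where "A = {F. pfilt F}"
  have "\<exists>M\<in>A. \<forall>X\<in>A. M \<subseteq> X \<longrightarrow> X = M"
  proof (rule Zorn_Lemma2, intro ballI)
    fix C assume C: "C \<in> chains A"
    then have CA: "\<And>F. F \<in> C \<Longrightarrow> pfilt F" and ch: "\<And>F G. F \<in> C \<Longrightarrow> G \<in> C \<Longrightarrow> F \<subseteq> G \<or> G \<subseteq> F"
      unfolding chains_def chain_subset_def A_def by auto
    define U where "U = {X. \<exists>n. {n..} \<subseteq> X} \<union> \<Union>C"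
    have up: "Y \<in> U" if "X \<in> U" "X \<subseteq> Y" for X Y
    proof -
      consider (a) n where "{n..} \<subseteq> X" | (b) F where "F \<in> C" "X \<in> F"
        using \<open>X \<in> U\<close> unfolding U_def by blast
      then show ?thesis
      proof cases
        case a
        then have "{n..} \<subseteq> Y" using that(2) by (rule subset_trans)
        then show ?thesis unfolding U_def by blast
      next
        case b
        then have "Y \<in> F" using pfilt_up[OF CA[OF b(1)] b(2) that(2)] by blast
        then show ?thesis unfolding U_def using b(1) by blast
      qed
    qed
    have cof: "X \<in> F" if "F \<in> C" "{n..} \<subseteq> X" for F X n
      using pfilt_tail[OF CA[OF that(1)] that(2)] .
    have int: "X \<inter> Y \<in> U" if "X \<in> U" "Y \<in> U" for X Y
    proof -
      consider (a) "\<exists>n. {n..} \<subseteq> X" | (b) F where "F \<in> C" "X \<in> F"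
        using \<open>X \<in> U\<close> unfolding U_def by blast
      then show ?thesis
      proof cases
        case a
        then obtain n where n: "{n..} \<subseteq> X" by blast
        consider (c) "\<exists>m. {m..} \<subseteq> Y" | (d) G where "G \<in> C" "Y \<in> G"
          using \<open>Y \<in> U\<close> unfolding U_def by blast
        then show ?thesis
        proof cases
          case c
          then obtain m where m: "{m..} \<subseteq> Y" by blast
          have "{max n m..} \<subseteq> X \<inter> Y" using n m by auto
          then show ?thesis unfolding U_def by blast
        next
          case d
          then have "X \<in> G" using cof n by blast
          then have "X \<inter> Y \<in> G" using pfilt_int[OF CA[OF d(1)]] d by blast
          then show ?thesis unfolding U_def using d by blast
        qed
      next
        case b
        consider (c) "\<exists>m. {m..} \<subseteq> Y" | (d) G where "G \<in> C" "Y \<in> G"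
          using \<open>Y \<in> U\<close> unfolding U_def by blast
        then show ?thesis
        proof cases
          case c
          then obtain m where m: "{m..} \<subseteq> Y" by blast
          then have "Y \<in> F" using cof b by blast
          then have "X \<inter> Y \<in> F" using pfilt_int[OF CA[OF b(1)]] b by blast
          then show ?thesis unfolding U_def using b by blast
        next
          case d
          show ?thesis
          proof (cases "F \<subseteq> G")
            case True
            then have "X \<inter> Y \<in> G" using pfilt_int[OF CA[OF d(1)]] b d by blast
            then show ?thesis unfolding U_def using d by blast
          next
            case False
            then have "G \<subseteq> F" using ch b d by blast
            then have "X \<inter> Y \<in> F" using pfilt_int[OF CA[OF b(1)]] b d by blast
            then show ?thesis unfolding U_def using b by blast
          qed
        qed
      qed
    qed
    have emp: "{} \<notin> U"
    proof
      assume "{} \<in> U"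
      then consider (a) n where "{n..} \<subseteq> ({}::nat set)" | (b) F where "F \<in> C" "{} \<in> F"
        unfolding U_def by blast
      then show False
      proof cases
        case a then show False by auto
      next
        case b then show False using CA[OF b(1)] unfolding pfilt_def by blast
      qed
    qed
    have tl: "{n..} \<in> U" for n unfolding U_def by blast
    have "pfilt U" unfolding pfilt_def
    proof (intro conjI ballI allI impI)
      show "\<And>X Y. X \<in> U \<Longrightarrow> X \<subseteq> Y \<Longrightarrow> Y \<in> U" by (rule up)
      show "\<And>X Y. X \<in> U \<Longrightarrow> Y \<in> U \<Longrightarrow> X \<inter> Y \<in> U" by (rule int)
      show "{} \<notin> U" by (rule emp)
      show "\<And>n. {n..} \<in> U" by (rule tl)
    qed
    moreover have "\<forall>X\<in>C. X \<subseteq> U" unfolding U_def by blast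
    ultimately show "\<exists>U\<in>A. \<forall>X\<in>C. X \<subseteq> U" unfolding A_def by blast
  qed
  then obtain M where M: "pfilt M" and max: "\<And>X. pfilt X \<Longrightarrow> M \<subseteq> X \<Longrightarrow> X = M"
    unfolding A_def by blast
  have "X \<in> M \<or> - X \<in> M" for X
  proof (rule ccontr)
    assume nX: "\<not> (X \<in> M \<or> - X \<in> M)"
    define M' where "M' = {Y. \<exists>Z\<in>M. Z \<inter> X \<subseteq> Y}"
    have "pfilt M'" unfolding pfilt_def
    proof (intro conjI ballI allI impI)
      fix Y Y' assume "Y \<in> M'" "Y \<subseteq> Y'" then show "Y' \<in> M'" unfolding M'_def by blast
    next
      fix Y Y' assume "Y \<in> M'" "Y' \<in> M'"
      then obtain Z Z' where "Z \<in> M" "Z' \<in> M" "Z \<inter> X \<subseteq> Y" "Z' \<inter> X \<subseteq> Y'" unfolding M'_def by blast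
      then show "Y \<inter> Y' \<in> M'" unfolding M'_def using pfilt_int[OF M, of Z Z'] by blast
    next
      show "{} \<notin> M'"
      proof
        assume "{} \<in> M'"
        then obtain Z where "Z \<in> M" "Z \<inter> X \<subseteq> {}" unfolding M'_def by blast
        then have "- X \<in> M" using pfilt_up[OF M] by blast
        then show False using nX by blast
      qed
    next
      fix n show "{n..} \<in> M'" unfolding M'_def using M unfolding pfilt_def by blast
    qed
    moreover have "M \<subseteq> M'" unfolding M'_def by blast
    ultimately have "M' = M" using max by blast
    moreover have "X \<in> M'" unfolding M'_def using pfilt_UNIV[OF M] by blast
    ultimately show False using nX by blast
  qed
  then show ?thesis using M by blast
qed

lemma ultra_limit:
  fixes f :: "nat \<Rightarrow> 'a::metric_space"
  assumes U: "pfilt U" and ultra: "\<forall>X. X \<in> U \<or> - X \<in> U" and K: "compact K"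
    and fK: "{j. f j \<in> K} \<in> U"
  shows "\<exists>x. \<forall>e>0. {j. dist (f j) x < e} \<in> U"
proof (rule ccontr)
  assume "\<not> ?thesis"
  then have "\<forall>x. \<exists>e>0. {j. dist (f j) x < e} \<notin> U" by blast
  then obtain r where r: "\<And>x. r x > 0" "\<And>x. {j. dist (f j) x < r x} \<notin> U" by metis
  have "K \<subseteq> (\<Union>x\<in>K. ball x (r x))" using r(1) by auto
  then obtain T where T: "T \<subseteq> K" "finite T" "K \<subseteq> (\<Union>x\<in>T. ball x (r x))"
    using compactE_image[OF K, of K "\<lambda>x. ball x (r x)"] by blast
  have "\<forall>x\<in>T. - {j. dist (f j) x < r x} \<in> U" using ultra r(2) by blast
  then have "(\<Inter>x\<in>T. - {j. dist (f j) x < r x}) \<in> U" by (rule pfilt_Inter[OF U T(2)])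
  then have "{j. f j \<in> K} \<inter> (\<Inter>x\<in>T. - {j. dist (f j) x < r x}) \<in> U" by (rule pfilt_int[OF U fK])
  then obtain j where j: "f j \<in> K" "\<forall>x\<in>T. \<not> dist (f j) x < r x" using pfilt_ne[OF U] by blast
  then obtain x where "x \<in> T" "f j \<in> ball x (r x)" using T(3) by blast
  then show False using j(2) by (simp add: dist_commute)
qed

lemma zero_if_small:
  fixes x :: real
  assumes "\<And>e. e > 0 \<Longrightarrow> \<bar>x\<bar> \<le> 2 * e"
  shows "x = 0"
proof (rule ccontr)
  assume "x \<noteq> 0"
  then have "\<bar>x\<bar> \<le> 2 * (\<bar>x\<bar> / 4)" using assms[of "\<bar>x\<bar> / 4"] by simp
  then show False using \<open>x \<noteq> 0\<close> by simp
qed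

lemma ray_from_gromov_seq:
  fixes a :: "nat \<Rightarrow> 'a::metric_space"
  assumes hyp: "gromov_hyperbolic \<delta> TYPE('a)" and a: "gromov_seq p a"
  shows "\<exists>\<gamma>. geodesic_ray p \<gamma> \<and>
    (\<forall>M. \<exists>N. \<forall>k\<ge>N. \<forall>t\<ge>0. gromov_product p (a k) (\<gamma> t) \<ge> min M t - \<delta> - 1)"
proof -
  have geo: "geodesic_space TYPE('a)" and prp: "proper_space TYPE('a)"
    and hyp4: "\<And>x y z w :: 'a. gromov_product w x z \<ge> min (gromov_product w x y) (gromov_product w y z) - \<delta>"
    using hyp unfolding gromov_hyperbolic_def by auto
  define D where "D j = dist p (a j)" for j
  have "\<forall>j. \<exists>g::real \<Rightarrow> 'a. g 0 = p \<and> g (D j) = a j \<and>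
      (\<forall>s\<in>{0..D j}. \<forall>t\<in>{0..D j}. dist (g s) (g t) = \<bar>s - t\<bar>)"
    using geo unfolding geodesic_space_def D_def by blast
  then obtain \<sigma> where \<sigma>: "\<And>j. \<sigma> j 0 = p" "\<And>j. \<sigma> j (D j) = a j"
    "\<And>j. \<forall>s\<in>{0..D j}. \<forall>t\<in>{0..D j}. dist (\<sigma> j s) (\<sigma> j t) = \<bar>s - t\<bar>"
    by metis
  have iso: "dist (\<sigma> j s) (\<sigma> j t) = \<bar>s - t\<bar>" if "0 \<le> s" "s \<le> D j" "0 \<le> t" "t \<le> D j" for j s t
    using \<sigma>(3)[of j] that by auto
  obtain U where U: "pfilt U" and ultra: "\<forall>X. X \<in> U \<or> - X \<in> U" using ultra_exists by blast
  have Dbig: "{j. t \<le> D j} \<in> U" for t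
  proof -
    obtain N where N: "\<forall>n\<ge>N. \<forall>m\<ge>N. gromov_product p (a n) (a m) \<ge> t"
      using a unfolding gromov_seq_def by blast
    have "t \<le> D j" if "j \<in> {N..}" for j
      using N[rule_format, of j j] that gp_self[of p "a j"] unfolding D_def by simp
    then have "{N..} \<subseteq> {j. t \<le> D j}" by blast
    then show ?thesis by (rule pfilt_tail[OF U])
  qed
  have dps: "dist p (\<sigma> j t) = t" if "0 \<le> t" "t \<le> D j" for j t
    using iso[of 0 j t] that \<sigma>(1)[of j] by simp
  have exlim: "\<exists>x. \<forall>e>0. {j. dist (\<sigma> j t) x < e} \<in> U" if "0 \<le> t" for t
  proof (rule ultra_limit[OF U ultra])
    show "compact (cball p t)" using prp unfolding proper_space_def by blast
    have "{j. t \<le> D j} \<subseteq> {j. \<sigma> j t \<in> cball p t}" using dps that by auto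
    then show "{j. \<sigma> j t \<in> cball p t} \<in> U" using pfilt_up[OF U Dbig] by blast
  qed
  define \<gamma> where "\<gamma> t = (SOME x. \<forall>e>0. {j. dist (\<sigma> j t) x < e} \<in> U)" for t
  have lim: "{j. dist (\<sigma> j t) (\<gamma> t) < e} \<in> U" if "0 \<le> t" "e > 0" for t e
    using someI_ex[OF exlim[OF that(1)]] that(2) unfolding \<gamma>_def by blast
  have g0: "\<gamma> 0 = p"
  proof (rule ccontr)
    assume "\<gamma> 0 \<noteq> p"
    then have "{j. dist (\<sigma> j 0) (\<gamma> 0) < dist p (\<gamma> 0)} \<in> U" using lim[of 0 "dist p (\<gamma> 0)"] by simp
    then obtain j where "dist (\<sigma> j 0) (\<gamma> 0) < dist p (\<gamma> 0)" using pfilt_ne[OF U] by blast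
    then show False using \<sigma>(1) by simp
  qed
  have giso: "dist (\<gamma> s) (\<gamma> t) = \<bar>s - t\<bar>" if "0 \<le> s" "0 \<le> t" for s t
  proof -
    have "\<bar>dist (\<gamma> s) (\<gamma> t) - \<bar>s - t\<bar>\<bar> \<le> 2 * e" if e: "e > 0" for e
    proof -
      have "{j. dist (\<sigma> j s) (\<gamma> s) < e} \<inter> {j. dist (\<sigma> j t) (\<gamma> t) < e} \<inter> {j. max s t \<le> D j} \<in> U"
        using lim[OF \<open>0 \<le> s\<close> e] lim[OF \<open>0 \<le> t\<close> e] Dbig[of "max s t"] pfilt_int[OF U] by blast
      then obtain j where j: "dist (\<sigma> j s) (\<gamma> s) < e" "dist (\<sigma> j t) (\<gamma> t) < e" "max s t \<le> D j"
        using pfilt_ne[OF U] by blast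
      have st: "dist (\<sigma> j s) (\<sigma> j t) = \<bar>s - t\<bar>" using iso[of s j t] j(3) \<open>0 \<le> s\<close> \<open>0 \<le> t\<close> by simp
      have "dist (\<gamma> s) (\<gamma> t) \<le> dist (\<gamma> s) (\<sigma> j s) + dist (\<sigma> j s) (\<sigma> j t) + dist (\<sigma> j t) (\<gamma> t)"
        using dist_triangle[of "\<gamma> s" "\<gamma> t" "\<sigma> j s"] dist_triangle[of "\<sigma> j s" "\<gamma> t" "\<sigma> j t"] by simp
      moreover have "dist (\<sigma> j s) (\<sigma> j t) \<le> dist (\<sigma> j s) (\<gamma> s) + dist (\<gamma> s) (\<gamma> t) + dist (\<gamma> t) (\<sigma> j t)"
        using dist_triangle[of "\<sigma> j s" "\<sigma> j t" "\<gamma> s"] dist_triangle[of "\<gamma> s" "\<sigma> j t" "\<gamma> t"] by simp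
      moreover have "dist (\<gamma> s) (\<sigma> j s) < e" "dist (\<gamma> t) (\<sigma> j t) < e"
        using j by (simp_all add: dist_commute)
      ultimately show ?thesis using j st by (intro abs_leI) linarith+
    qed
    then show ?thesis using zero_if_small[of "dist (\<gamma> s) (\<gamma> t) - \<bar>s - t\<bar>"] by simp
  qed
  have ray: "geodesic_ray p \<gamma>" unfolding geodesic_ray_def using g0 giso by simp
  have est: "\<exists>N. \<forall>k\<ge>N. \<forall>t\<ge>0. gromov_product p (a k) (\<gamma> t) \<ge> min M t - \<delta> - 1" for M
  proof -
    obtain N where N: "\<forall>n\<ge>N. \<forall>m\<ge>N. gromov_product p (a n) (a m) \<ge> M"
      using a unfolding gromov_seq_def by blast
    have "gromov_product p (a k) (\<gamma> t) \<ge> min M t - \<delta> - 1" if k: "k \<ge> N" and t: "t \<ge> 0" for k t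
    proof -
      have "{j. dist (\<sigma> j t) (\<gamma> t) < 1} \<inter> {N..} \<inter> {j. t \<le> D j} \<in> U"
        using lim[OF t, of 1] pfilt_tail[OF U, of N "{N..}"] Dbig[of t] pfilt_int[OF U] by simp
      then obtain j where j: "dist (\<sigma> j t) (\<gamma> t) < 1" "N \<le> j" "t \<le> D j"
        using pfilt_ne[OF U] by blast
      have d1: "dist (a j) (\<sigma> j t) = D j - t" using iso[of "D j" j t] \<sigma>(2)[of j] j t by simp
      have gpt: "gromov_product p (a j) (\<sigma> j t) = t"
        unfolding gromov_product_def using d1 dps[OF t j(3)] unfolding D_def by simp
      have "gromov_product p (a k) (a j) \<ge> M" using N k j(2) by blast
      then have mm: "min M t \<le> min (gromov_product p (a k) (a j)) (gromov_product p (a j) (\<sigma> j t))"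
        using gpt by (intro min.mono) auto
      have "gromov_product p (a k) (\<sigma> j t) \<ge> min (gromov_product p (a k) (a j)) (gromov_product p (a j) (\<sigma> j t)) - \<delta>"
        by (rule hyp4)
      then have "gromov_product p (a k) (\<sigma> j t) \<ge> min M t - \<delta>"
        using mm by linarith
      moreover have "\<bar>gromov_product p (a k) (\<gamma> t) - gromov_product p (a k) (\<sigma> j t)\<bar> \<le> dist (\<gamma> t) (\<sigma> j t)"
        by (rule gp_lip)
      moreover have "dist (\<gamma> t) (\<sigma> j t) < 1" using j(1) by (simp add: dist_commute)
      ultimately show ?thesis using abs_le_D2 by fastforce
    qed
    then show ?thesis by blast
  qed
  show ?thesis using ray est by blast
qed

lemma unif_cauchy_gp:
  assumes geo: "geodesic_space TYPE('a::metric_space)" and ep: "\<epsilon> > 0"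
    and g: "\<And>M. \<exists>N. \<forall>m\<ge>N. \<forall>n\<ge>N. gromov_product p (c m) (c n) \<ge> M"
  shows "unif_cauchy \<epsilon> p (c :: nat \<Rightarrow> 'a)"
  unfolding unif_cauchy_def
proof (intro allI impI)
  fix e :: real assume e: "e > 0"
  obtain M where M: "\<forall>z\<ge>M. 2 / \<epsilon> * exp (- \<epsilon> * z) < e" using small_exp[OF ep e] by blast
  obtain N where N: "\<forall>m\<ge>N. \<forall>n\<ge>N. gromov_product p (c m) (c n) \<ge> M" using g by blast
  have "d_unif \<epsilon> p (c m) (c n) < e" if "m \<ge> N" "n \<ge> N" for m n
    using d_unif_bound[OF geo ep, of p "c m" "c n"] M N that by fastforce
  then show "\<exists>N. \<forall>m\<ge>N. \<forall>n\<ge>N. d_unif \<epsilon> p (c m) (c n) < e" by blast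
qed

lemma unif_null_gp:
  assumes geo: "geodesic_space TYPE('a::metric_space)" and ep: "\<epsilon> > 0"
    and g: "\<And>M. \<exists>N. \<forall>k\<ge>N. gromov_product p (u k) (v k) \<ge> M"
  shows "(\<lambda>k. d_unif \<epsilon> p (u k) (v k :: 'a)) \<longlonglongrightarrow> 0"
proof (rule LIMSEQ_I)
  fix e :: real assume e: "e > 0"
  obtain M where M: "\<forall>z\<ge>M. 2 / \<epsilon> * exp (- \<epsilon> * z) < e" using small_exp[OF ep e] by blast
  obtain N where N: "\<forall>k\<ge>N. gromov_product p (u k) (v k) \<ge> M" using g by blast
  have "norm (d_unif \<epsilon> p (u k) (v k) - 0) < e" if "k \<ge> N" for k
    using d_unif_bound[OF geo ep, of p "u k" "v k"] d_unif_nonneg[OF geo, of \<epsilon> p "u k" "v k"] M N that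
    by fastforce
  then show "\<exists>no. \<forall>k\<ge>no. norm (d_unif \<epsilon> p (u k) (v k) - 0) < e" by blast
qed

lemma null_sum:
  fixes f g h :: "nat \<Rightarrow> real"
  assumes "\<And>n. 0 \<le> f n" "\<And>n. f n \<le> g n + h n" "g \<longlonglongrightarrow> 0" "h \<longlonglongrightarrow> 0"
  shows "f \<longlonglongrightarrow> 0"
proof (rule tendsto_sandwich[of "\<lambda>_. 0" f sequentially "\<lambda>n. g n + h n"])
  show "(\<lambda>n. g n + h n) \<longlonglongrightarrow> 0" using tendsto_add[OF assms(3,4)] by simp
qed (use assms in auto)

lemma R_trans:
  assumes geo: "geodesic_space TYPE('a::metric_space)"
    and "(c1, c2) \<in> unif_equiv \<epsilon> p" "(c2, c3) \<in> unif_equiv \<epsilon> p"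
  shows "(c1, c3 :: nat \<Rightarrow> 'a) \<in> unif_equiv \<epsilon> p"
proof -
  have "(\<lambda>n. d_unif \<epsilon> p (c1 n) (c3 n)) \<longlonglongrightarrow> 0"
    by (rule null_sum[OF d_unif_nonneg[OF geo] d_unif_triangle[OF geo]])
       (use assms(2,3) in \<open>auto simp: unif_equiv_def\<close>)
  then show ?thesis using assms(2,3) unfolding unif_equiv_def by auto
qed

lemma R_sym:
  assumes geo: "geodesic_space TYPE('a::metric_space)"
    and "(c1, c2) \<in> unif_equiv \<epsilon> p"
  shows "(c2, c1 :: nat \<Rightarrow> 'a) \<in> unif_equiv \<epsilon> p"
  using assms(2) d_unif_sym[OF geo] unfolding unif_equiv_def by auto

lemma R_refl:
  assumes geo: "geodesic_space TYPE('a::metric_space)" and "unif_cauchy \<epsilon> p c"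
  shows "(c, c :: nat \<Rightarrow> 'a) \<in> unif_equiv \<epsilon> p"
proof -
  have "d_unif \<epsilon> p (c n) (c n) = 0" for n
    using d_unif_refl[of \<epsilon> p "c n"] d_unif_nonneg[OF geo, of \<epsilon> p "c n" "c n"] by simp
  then show ?thesis using assms(2) unfolding unif_equiv_def by simp
qed

lemma class_eq:
  assumes geo: "geodesic_space TYPE('a::metric_space)"
    and "(c1, \<xi>) \<in> unif_equiv \<epsilon> p" "(c2, \<xi>) \<in> unif_equiv \<epsilon> p"
  shows "unif_equiv \<epsilon> p `` {c1} = unif_equiv \<epsilon> p `` {c2 :: nat \<Rightarrow> 'a}"
proof -
  have 12: "(c1, c2) \<in> unif_equiv \<epsilon> p" using R_trans[OF geo assms(2) R_sym[OF geo assms(3)]] .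
  have 21: "(c2, c1) \<in> unif_equiv \<epsilon> p" using R_sym[OF geo 12] .
  show ?thesis using R_trans[OF geo 12] R_trans[OF geo 21] by blast
qed

lemma key_claim:
  fixes zs :: "nat \<Rightarrow> 'a::metric_space"
  assumes hyp: "gromov_hyperbolic \<delta> TYPE('a)" and ep: "\<epsilon> > 0"
    and bij: "bij_betw (boundary_map \<epsilon> p) (gromov_boundary p) (unif_boundary \<epsilon> p)"
    and xb: "x \<in> unif_boundary \<epsilon> p"
    and conv: "unif_converges_to \<epsilon> p zs x"
    and q: "strict_mono q" and gs: "gromov_seq p (zs \<circ> q)"
  shows "\<exists>\<gamma>. geodesic_ray p \<gamma> \<and> boundary_map \<epsilon> p (ray_equiv p `` {\<gamma>}) = x \<and>
    (\<forall>M. \<exists>N. \<forall>k\<ge>N. gromov_product p (zs (q k)) (\<gamma> (real k)) \<ge> M)"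
proof -
  have geo: "geodesic_space TYPE('a)" using hyp unfolding gromov_hyperbolic_def by auto
  obtain \<gamma> where ray: "geodesic_ray p \<gamma>"
    and est: "\<And>M. \<exists>N. \<forall>k\<ge>N. \<forall>t\<ge>0. gromov_product p ((zs \<circ> q) k) (\<gamma> t) \<ge> min M t - \<delta> - 1"
    using ray_from_gromov_seq[OF hyp gs] by blast
  have grow: "\<exists>N. \<forall>k\<ge>N. gromov_product p (zs (q k)) (\<gamma> (real k)) \<ge> M" for M
  proof -
    obtain N0 where N0: "\<forall>k\<ge>N0. \<forall>t\<ge>0. gromov_product p ((zs \<circ> q) k) (\<gamma> t) \<ge> min (M + \<delta> + 1) t - \<delta> - 1"
      using est by blast
    have "gromov_product p (zs (q k)) (\<gamma> (real k)) \<ge> M" if "k \<ge> max N0 (nat \<lceil>M + \<delta> + 1\<rceil>)" for k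
    proof -
      have "real k \<ge> M + \<delta> + 1" using that by linarith
      then have "min (M + \<delta> + 1) (real k) = M + \<delta> + 1" by simp
      moreover have "k \<ge> N0" using that by simp
      ultimately show ?thesis using N0[rule_format, of k "real k"] by simp
    qed
    then show ?thesis by blast
  qed
  define \<xi> where "\<xi> k = \<gamma> (real k)" for k
  have dpg: "dist p (\<gamma> t) = t" if "t \<ge> 0" for t
    using ray that unfolding geodesic_ray_def by (metis abs_of_nonneg diff_0 abs_minus_cancel order_refl)
  have gpxi: "gromov_product p (\<xi> m) (\<xi> n) = min (real m) (real n)" for m n
  proof -
    have "dist (\<xi> m) (\<xi> n) = \<bar>real m - real n\<bar>" using ray unfolding geodesic_ray_def \<xi>_def by simp
    then show ?thesis unfolding gromov_product_def \<xi>_def using dpg[of "real m"] dpg[of "real n"]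
      by (simp add: \<xi>_def min_def abs_if)
  qed
  have xi_cauchy: "unif_cauchy \<epsilon> p \<xi>"
  proof (rule unif_cauchy_gp[OF geo ep])
    fix M :: real
    have "gromov_product p (\<xi> m) (\<xi> n) \<ge> M" if "m \<ge> nat \<lceil>M\<rceil>" "n \<ge> nat \<lceil>M\<rceil>" for m n
      using that unfolding gpxi by linarith
    then show "\<exists>N. \<forall>m\<ge>N. \<forall>n\<ge>N. gromov_product p (\<xi> m) (\<xi> n) \<ge> M" by blast
  qed
  have null1: "(\<lambda>k. d_unif \<epsilon> p (zs (q k)) (\<xi> k)) \<longlonglongrightarrow> 0"
    by (rule unif_null_gp[OF geo ep]) (use grow in \<open>simp add: \<xi>_def\<close>)
  obtain c where cx: "c \<in> x" and cl: "(\<lambda>n. d_unif \<epsilon> p (zs n) (c n)) \<longlonglongrightarrow> 0"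
    using conv unfolding unif_converges_to_def by blast
  obtain c0 where c0: "c0 \<in> unif_boundary_seqs \<epsilon> p" and x_eq: "x = unif_equiv \<epsilon> p `` {c0}"
    using xb unfolding unif_boundary_def by (auto elim: quotientE)
  have c0c: "(c0, c) \<in> unif_equiv \<epsilon> p" using cx x_eq by simp
  have c0_cauchy: "unif_cauchy \<epsilon> p c0" using c0 unfolding unif_boundary_seqs_def by simp
  have c_cauchy: "unif_cauchy \<epsilon> p c" using c0c unfolding unif_equiv_def by simp
  have t1: "(\<lambda>k. d_unif \<epsilon> p (c0 k) (c k)) \<longlonglongrightarrow> 0" using c0c unfolding unif_equiv_def by simp
  have t2: "(\<lambda>k. d_unif \<epsilon> p (c k) (c (q k))) \<longlonglongrightarrow> 0"
  proof (rule LIMSEQ_I)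
    fix e :: real assume "e > 0"
    then obtain N where N: "\<forall>m\<ge>N. \<forall>n\<ge>N. d_unif \<epsilon> p (c m) (c n) < e"
      using c_cauchy unfolding unif_cauchy_def by blast
    have "norm (d_unif \<epsilon> p (c k) (c (q k)) - 0) < e" if "k \<ge> N" for k
      using N that seq_suble[OF q, of k] d_unif_nonneg[OF geo, of \<epsilon> p "c k" "c (q k)"] by auto
    then show "\<exists>no. \<forall>k\<ge>no. norm (d_unif \<epsilon> p (c k) (c (q k)) - 0) < e" by blast
  qed
  have t3: "(\<lambda>k. d_unif \<epsilon> p (c (q k)) (zs (q k))) \<longlonglongrightarrow> 0"
    using LIMSEQ_subseq_LIMSEQ[OF cl q] d_unif_sym[OF geo] by (simp add: o_def)
  have "(\<lambda>k. d_unif \<epsilon> p (c0 k) (\<xi> k)) \<longlonglongrightarrow> 0"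
  proof (rule null_sum[OF d_unif_nonneg[OF geo]])
    fix k
    show "d_unif \<epsilon> p (c0 k) (\<xi> k) \<le> (d_unif \<epsilon> p (c0 k) (c k) + d_unif \<epsilon> p (c k) (c (q k))) +
        (d_unif \<epsilon> p (c (q k)) (zs (q k)) + d_unif \<epsilon> p (zs (q k)) (\<xi> k))"
      using d_unif_triangle[OF geo, of \<epsilon> p "c0 k" "\<xi> k" "c k"]
        d_unif_triangle[OF geo, of \<epsilon> p "c k" "\<xi> k" "c (q k)"]
        d_unif_triangle[OF geo, of \<epsilon> p "c (q k)" "\<xi> k" "zs (q k)"] by linarith
  next
    show "(\<lambda>k. d_unif \<epsilon> p (c0 k) (c k) + d_unif \<epsilon> p (c k) (c (q k))) \<longlonglongrightarrow> 0"
      using tendsto_add[OF t1 t2] by simp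
    show "(\<lambda>k. d_unif \<epsilon> p (c (q k)) (zs (q k)) + d_unif \<epsilon> p (zs (q k)) (\<xi> k)) \<longlonglongrightarrow> 0"
      using tendsto_add[OF t3 null1] by simp
  qed
  then have c0xi: "(c0, \<xi>) \<in> unif_equiv \<epsilon> p"
    using c0_cauchy xi_cauchy unfolding unif_equiv_def by simp
  have cls: "ray_equiv p `` {\<gamma>} \<in> gromov_boundary p"
    unfolding gromov_boundary_def using ray by (intro quotientI) simp
  have bm: "boundary_map \<epsilon> p (ray_equiv p `` {\<gamma>}) \<in> unif_boundary \<epsilon> p"
    using bij_betw_apply[OF bij cls] .
  then obtain c1 where bm_eq: "boundary_map \<epsilon> p (ray_equiv p `` {\<gamma>}) = unif_equiv \<epsilon> p `` {c1}"
    unfolding unif_boundary_def by (auto elim: quotientE)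
  have gg: "(\<gamma>, \<gamma>) \<in> ray_equiv p" unfolding ray_equiv_def using ray by (auto intro: bdd_aboveI[where M=0])
  have "\<xi> \<in> boundary_map \<epsilon> p (ray_equiv p `` {\<gamma>})"
  proof -
    have xi_eq: "(\<lambda>k. \<gamma> (real k)) = \<xi>" unfolding \<xi>_def by simp
    have "\<gamma> \<in> ray_equiv p `` {\<gamma>}" using gg by simp
    moreover have "\<xi> \<in> unif_equiv \<epsilon> p `` {(\<lambda>k. \<gamma> (real k))}"
      unfolding xi_eq using R_refl[OF geo xi_cauchy] by simp
    ultimately show ?thesis unfolding boundary_map_def by blast
  qed
  then have c1xi: "(c1, \<xi>) \<in> unif_equiv \<epsilon> p" using bm_eq by simp
  have "boundary_map \<epsilon> p (ray_equiv p `` {\<gamma>}) = x"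
    unfolding bm_eq x_eq using class_eq[OF geo c1xi c0xi] .
  then show ?thesis using ray grow by blast
qed

theorem lemma3p5:
  fixes \<delta> \<epsilon> :: real and p :: "'a::metric_space"
    and x :: "(nat \<Rightarrow> 'a) set" and xs ys :: "nat \<Rightarrow> 'a"
  assumes "gromov_hyperbolic \<delta> TYPE('a)"
    and "\<epsilon> > 0"
    and "bij_betw (boundary_map \<epsilon> p) (gromov_boundary p) (unif_boundary \<epsilon> p)"
    and "x \<in> unif_boundary \<epsilon> p"
    and "unif_converges_to \<epsilon> p xs x"
    and "unif_converges_to \<epsilon> p ys x"
  shows "\<forall>r s. strict_mono r \<and> strict_mono s \<and> gromov_seq p (xs \<circ> r) \<and> gromov_seq p (ys \<circ> s)
           \<longrightarrow> gromov_seq_equiv p (xs \<circ> r) (ys \<circ> s)"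
proof (intro allI impI)
  fix r s :: "nat \<Rightarrow> nat"
  assume rs: "strict_mono r \<and> strict_mono s \<and> gromov_seq p (xs \<circ> r) \<and> gromov_seq p (ys \<circ> s)"
  have hyp4: "\<And>x y z w :: 'a. gromov_product w x z \<ge> min (gromov_product w x y) (gromov_product w y z) - \<delta>"
    using assms(1) unfolding gromov_hyperbolic_def by auto
  obtain \<gamma>a where ra: "geodesic_ray p \<gamma>a" and ba: "boundary_map \<epsilon> p (ray_equiv p `` {\<gamma>a}) = x"
    and ga: "\<And>M. \<exists>N. \<forall>k\<ge>N. gromov_product p (xs (r k)) (\<gamma>a (real k)) \<ge> M"
    using key_claim[OF assms(1-4) assms(5), of r] rs by blast
  obtain \<gamma>b where rb: "geodesic_ray p \<gamma>b" and bb: "boundary_map \<epsilon> p (ray_equiv p `` {\<gamma>b}) = x"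
    and gb: "\<And>M. \<exists>N. \<forall>k\<ge>N. gromov_product p (ys (s k)) (\<gamma>b (real k)) \<ge> M"
    using key_claim[OF assms(1-4) assms(6), of s] rs by blast
  have ca: "ray_equiv p `` {\<gamma>a} \<in> gromov_boundary p"
    unfolding gromov_boundary_def using ra by (intro quotientI) simp
  have cb: "ray_equiv p `` {\<gamma>b} \<in> gromov_boundary p"
    unfolding gromov_boundary_def using rb by (intro quotientI) simp
  have "ray_equiv p `` {\<gamma>a} = ray_equiv p `` {\<gamma>b}"
    using bij_betw_imp_inj_on[OF assms(3)] ca cb ba bb unfolding inj_on_def by blast
  moreover have "(\<gamma>b, \<gamma>b) \<in> ray_equiv p" unfolding ray_equiv_def using rb
    by (auto intro: bdd_aboveI[where M=0])
  ultimately have "(\<gamma>a, \<gamma>b) \<in> ray_equiv p" by blast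
  then have "bdd_above ((\<lambda>t. dist (\<gamma>a t) (\<gamma>b t)) ` {0..})" unfolding ray_equiv_def by simp
  then obtain K where K: "\<And>t. t \<ge> 0 \<Longrightarrow> dist (\<gamma>a t) (\<gamma>b t) \<le> K"
    unfolding bdd_above_def by auto
  have dpa: "dist p (\<gamma>a t) = t" if "t \<ge> 0" for t
    using ra that unfolding geodesic_ray_def by (metis abs_of_nonneg diff_0 abs_minus_cancel order_refl)
  have dpb: "dist p (\<gamma>b t) = t" if "t \<ge> 0" for t
    using rb that unfolding geodesic_ray_def by (metis abs_of_nonneg diff_0 abs_minus_cancel order_refl)
  have gab: "gromov_product p (\<gamma>a t) (\<gamma>b t) \<ge> t - K / 2" if "t \<ge> 0" for t
    using K[OF that] dpa[OF that] dpb[OF that] unfolding gromov_product_def by argo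
  have lim: "filterlim (\<lambda>k. gromov_product p ((xs \<circ> r) k) ((ys \<circ> s) k)) at_top sequentially"
    unfolding filterlim_at_top eventually_sequentially
  proof
    fix Z :: real
    define M where "M = Z + 2 * \<bar>\<delta>\<bar>"
    obtain Na where Na: "\<forall>k\<ge>Na. gromov_product p (xs (r k)) (\<gamma>a (real k)) \<ge> M" using ga by blast
    obtain Nb where Nb: "\<forall>k\<ge>Nb. gromov_product p (ys (s k)) (\<gamma>b (real k)) \<ge> M" using gb by blast
    have "Z \<le> gromov_product p ((xs \<circ> r) k) ((ys \<circ> s) k)"
      if k: "k \<ge> max (max Na Nb) (nat \<lceil>M + K / 2\<rceil>)" for k
    proof -
      have A: "gromov_product p (xs (r k)) (\<gamma>a (real k)) \<ge> M" using Na k by simp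
      have B: "gromov_product p (\<gamma>b (real k)) (ys (s k)) \<ge> M" using Nb k gp_sym[of p "\<gamma>b (real k)" "ys (s k)"] by simp
      have "real k \<ge> M + K / 2" using k by linarith
      then have C: "gromov_product p (\<gamma>a (real k)) (\<gamma>b (real k)) \<ge> M" using gab[of "real k"] by simp
      have D: "gromov_product p (\<gamma>a (real k)) (ys (s k)) \<ge> min (gromov_product p (\<gamma>a (real k)) (\<gamma>b (real k)))
          (gromov_product p (\<gamma>b (real k)) (ys (s k))) - \<delta>" by (rule hyp4)
      have E: "gromov_product p (xs (r k)) (ys (s k)) \<ge> min (gromov_product p (xs (r k)) (\<gamma>a (real k)))
          (gromov_product p (\<gamma>a (real k)) (ys (s k))) - \<delta>" by (rule hyp4)
      have D': "gromov_product p (\<gamma>a (real k)) (ys (s k)) \<ge> M - \<delta>"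
        using D B C by linarith
      have "min (gromov_product p (xs (r k)) (\<gamma>a (real k))) (gromov_product p (\<gamma>a (real k)) (ys (s k)))
          \<ge> M - \<bar>\<delta>\<bar>" using A D' by linarith
      then show ?thesis using E unfolding M_def by (simp; linarith)
    qed
    then show "\<exists>N. \<forall>k\<ge>N. Z \<le> gromov_product p ((xs \<circ> r) k) ((ys \<circ> s) k)" by blast
  qed
  show "gromov_seq_equiv p (xs \<circ> r) (ys \<circ> s)"
    unfolding gromov_seq_equiv_def using rs lim by blast
qed

end
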